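(* Let $k$ be a field, $V$ an $n$-dimensional $k$-vector space, $S=\operatorname{Sym}V=k[x_1,\dots,x_n]$. If $f\in S_{d+1}$ is an LDS form of degree $d+1\geq 3$, then $f$ is not GIT semistable with respect to the standard action of $\mathrm{SL}(n)=\mathrm{SL}(V)$ on $S_{d+1}$.
   Context: A form $f\in S_{d+1}$ is called an LDS form if, after a linear change of variables, it can be written as $f(x_1,\dots,x_n)=\sum_{i=1}^{\ell} x_i\,\frac{\partial H(x_{\ell+1},\dots,x_{2\ell})}{\partial x_{\ell+i}}+G(x_{\ell+1},\dots,x_n)$, where $H$ and $G$ are forms of degree $d+1$ in $\ell$ and $n-\ell$ variables respectively. *)

theory Defs
  imports "HOL-Analysis.Analysis" "HOL-Library.Poly_Mapping"
    "HOL-Computational_Algebra.Polynomial" "HOL-Computational_Algebra.Fraction_Field"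
begin

text \<open>Multivariate polynomials in variables indexed by 'v with coefficients in 'a,
  represented as finitely supported maps from monomials (exponent vectors) to coefficients.\<close>
type_synonym ('v, 'a) mpoly = "('v \<Rightarrow>\<^sub>0 nat) \<Rightarrow>\<^sub>0 'a"

definition mdeg :: "('v \<Rightarrow>\<^sub>0 nat) \<Rightarrow> nat" where
  "mdeg m = (\<Sum>i\<in>Poly_Mapping.keys m. Poly_Mapping.lookup m i)"

definition homogeneous :: "nat \<Rightarrow> ('v, 'a::zero) mpoly \<Rightarrow> bool" where
  "homogeneous D p \<longleftrightarrow> (\<forall>m\<in>Poly_Mapping.keys p. mdeg m = D)"

definition vars_in :: "'v set \<Rightarrow> ('v, 'a::zero) mpoly \<Rightarrow> bool" where
  "vars_in A p \<longleftrightarrow> (\<forall>m\<in>Poly_Mapping.keys p. Poly_Mapping.keys m \<subseteq> A)"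

definition mvar :: "'v \<Rightarrow> ('v, 'a::{zero,one}) mpoly" where
  "mvar i = Poly_Mapping.single (Poly_Mapping.single i 1) 1"

definition mconst :: "'a::zero \<Rightarrow> ('v, 'a) mpoly" where
  "mconst c = Poly_Mapping.single 0 c"

definition pderiv_var :: "'v \<Rightarrow> ('v, 'a::comm_ring_1) mpoly \<Rightarrow> ('v, 'a) mpoly" where
  "pderiv_var j p = (\<Sum>m\<in>Poly_Mapping.keys p.
      Poly_Mapping.single (m - Poly_Mapping.single j 1) (of_nat (Poly_Mapping.lookup m j) * Poly_Mapping.lookup p m))"

definition msubst :: "('v \<Rightarrow> ('w, 'a::comm_ring_1) mpoly) \<Rightarrow> ('v, 'a) mpoly \<Rightarrow> ('w, 'a) mpoly" where
  "msubst s p = (\<Sum>m\<in>Poly_Mapping.keys p. mconst (Poly_Mapping.lookup p m) * (\<Prod>i\<in>Poly_Mapping.keys m. s i ^ Poly_Mapping.lookup m i))"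

definition lin_change :: "'a::comm_ring_1 ^ 'n::finite ^ 'n \<Rightarrow> ('n, 'a) mpoly \<Rightarrow> ('n, 'a) mpoly" where
  "lin_change g p = msubst (\<lambda>i. \<Sum>j\<in>UNIV. mconst (g $ i $ j) * mvar j) p"

text \<open>LDS forms of degree D in the variables indexed by the finite type 'n (n = CARD('n)).
  The enumeration e identifies the variables with x_1,...,x_n (x_{i+1} = e i).\<close>
definition LDS :: "nat \<Rightarrow> ('n::finite, 'a::field) mpoly \<Rightarrow> bool" where
  "LDS D f \<longleftrightarrow> (\<exists>(h :: 'a ^ 'n ^ 'n) (e :: nat \<Rightarrow> 'n) (l :: nat) H G.
     det h \<noteq> 0 \<and> bij_betw e {..<CARD('n)} UNIV \<and> 1 \<le> l \<and> 2 * l \<le> CARD('n) \<and>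
     homogeneous D H \<and> vars_in (e ` {l..<2*l}) H \<and>
     homogeneous D G \<and> vars_in (e ` {l..<CARD('n)}) G \<and>
     lin_change h f = (\<Sum>i<l. mvar (e i) * pderiv_var (e (l + i)) H) + G)"

text \<open>The infinite field K = k(t) of rational functions over k, used to test
  SL(n)-invariance as a polynomial identity (SL(n,K) is Zariski dense for infinite K).\<close>
type_synonym 'a ratfun = "'a poly fract"

definition emb :: "'a::field \<Rightarrow> 'a ratfun" where
  "emb a = Fract [:a:] 1"

text \<open>Evaluation of a polynomial F in the coefficients c_m of a form (variables indexed by
  monomials m), at a coefficient vector c with values in K.\<close>
definition eval_coeff :: "('n \<Rightarrow>\<^sub>0 nat, 'a::field) mpoly \<Rightarrow> (('n \<Rightarrow>\<^sub>0 nat) \<Rightarrow> 'a ratfun) \<Rightarrow> 'a ratfun" where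
  "eval_coeff F c = (\<Sum>\<mu>\<in>Poly_Mapping.keys F. emb (Poly_Mapping.lookup F \<mu>) * (\<Prod>m\<in>Poly_Mapping.keys \<mu>. c m ^ Poly_Mapping.lookup \<mu> m))"

definition SL_invariant :: "nat \<Rightarrow> ('n::finite \<Rightarrow>\<^sub>0 nat, 'a::field) mpoly \<Rightarrow> bool" where
  "SL_invariant D F \<longleftrightarrow> (\<forall>(g :: 'a ratfun ^ 'n ^ 'n) (\<phi> :: ('n, 'a ratfun) mpoly).
      det g = 1 \<longrightarrow> homogeneous D \<phi> \<longrightarrow>
      eval_coeff F (Poly_Mapping.lookup (lin_change g \<phi>)) = eval_coeff F (Poly_Mapping.lookup \<phi>))"

definition GIT_semistable :: "nat \<Rightarrow> ('n::finite, 'a::field) mpoly \<Rightarrow> bool" where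
  "GIT_semistable D f \<longleftrightarrow> (\<exists>F e. 0 < e \<and> homogeneous e F \<and> SL_invariant D F \<and>
      eval_coeff F (Poly_Mapping.lookup (Poly_Mapping.map emb f)) \<noteq> 0)"

end

theory Submission imports Defs
begin

definition tf :: "'a::idom \<Rightarrow> 'a fract" where "tf x = Fract x 1"
lemma tf_0[simp]: "tf 0 = 0" by (simp add: tf_def Zero_fract_def)
lemma tf_1[simp]: "tf 1 = 1" by (simp add: tf_def One_fract_def)
lemma tf_add[simp]: "tf (x + y) = tf x + tf y" by (simp add: tf_def)
lemma tf_mult[simp]: "tf (x * y) = tf x * tf y" by (simp add: tf_def)
lemma tf_uminus[simp]: "tf (- x) = - tf x" by (simp add: tf_def)
lemma tf_eq_iff[simp]: "tf x = tf y \<longleftrightarrow> x = y" by (simp add: tf_def eq_fract)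
lemma tf_eq_0_iff[simp]: "tf x = 0 \<longleftrightarrow> x = 0" using tf_eq_iff[of x 0] by simp

lemma emb_tf: "emb a = tf [:a:]" by (simp add: emb_def tf_def)
lemma emb_0[simp]: "emb 0 = 0" by (simp add: emb_tf)
lemma emb_1[simp]: "emb 1 = 1" by (simp add: emb_tf one_pCons[symmetric])
lemma emb_add: "emb (a + b) = emb a + emb b"
  by (simp only: emb_tf tf_add[symmetric]) simp
lemma emb_mult: "emb (a * b) = emb a * emb b"
  by (simp only: emb_tf tf_mult[symmetric]) simp
lemma emb_eq_0[simp]: "emb a = 0 \<longleftrightarrow> a = 0" by (simp add: emb_tf)
lemma emb_sum: "emb (sum f A) = (\<Sum>x\<in>A. emb (f x))"
  by (induction A rule: infinite_finite_induct) (auto simp: emb_add)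
lemma emb_prod: "emb (prod f A) = (\<Prod>x\<in>A. emb (f x))"
  by (induction A rule: infinite_finite_induct) (auto simp: emb_mult)
lemma emb_power: "emb (a ^ n) = emb a ^ n"
  by (induction n) (auto simp: emb_mult)
lemma emb_uminus: "emb (- a) = - emb a"
  by (simp only: emb_tf tf_uminus[symmetric]) simp
lemma emb_of_int: "emb (of_int z) = of_int z"
proof -
  have n: "emb (of_nat n) = of_nat n" for n by (induction n) (auto simp: emb_add)
  show ?thesis by (cases z rule: int_cases) (auto simp: emb_uminus n simp del: of_nat_Suc)
qed
lemma emb_inverse: "emb (inverse a) = inverse (emb a)"
proof (cases "a = 0")
  case False
  have "emb a * emb (inverse a) = 1" using False by (simp add: emb_mult[symmetric])
  then show ?thesis by (metis inverse_unique)
qed simp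

definition wt :: "('n::finite \<Rightarrow> 'b::comm_ring_1) \<Rightarrow> ('n \<Rightarrow>\<^sub>0 nat) \<Rightarrow> 'b" where
  "wt c m = (\<Prod>j\<in>UNIV. c j ^ Poly_Mapping.lookup m j)"

lemma wt_add: "wt c (m1 + m2) = wt c m1 * wt c m2"
  by (simp add: wt_def lookup_add power_add prod.distrib)

lemma wt_0[simp]: "wt c 0 = 1"
  by (simp add: wt_def)

lemma wt_single: "wt c (Poly_Mapping.single j 1) = c j"
proof -
  have "(\<Prod>i\<in>UNIV. c i ^ Poly_Mapping.lookup (Poly_Mapping.single j 1) i) = (\<Prod>i\<in>UNIV. if i = j then c j else 1)"
    by (rule prod.cong) (auto simp: lookup_single when_def)
  then show ?thesis by (simp add: wt_def)
qed

definition Psi :: "('n::finite \<Rightarrow> 'k::field ratfun) \<Rightarrow> ('n, 'k) mpoly \<Rightarrow> ('n, 'k ratfun) mpoly" where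
  "Psi c p = Poly_Mapping.mapp (\<lambda>m a. emb a * wt c m) p"

lemma lookup_Psi: "Poly_Mapping.lookup (Psi c p) m = emb (Poly_Mapping.lookup p m) * wt c m"
  by (auto simp: Psi_def lookup_mapp when_def in_keys_iff)

lemma Psi_add: "Psi c (p + q) = Psi c p + Psi c q"
  by (rule poly_mapping_eqI) (simp add: lookup_Psi lookup_add emb_add distrib_right)

lemma Psi_0[simp]: "Psi c 0 = 0"
  by (rule poly_mapping_eqI) (simp add: lookup_Psi)

lemma Psi_single: "Psi c (Poly_Mapping.single m a) = Poly_Mapping.single m (emb a * wt c m)"
  by (rule poly_mapping_eqI) (simp add: lookup_Psi lookup_single when_def)

lemma Psi_sum: "Psi c (sum f A) = (\<Sum>x\<in>A. Psi c (f x))"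
  by (induction A rule: infinite_finite_induct) (auto simp: Psi_add)

lemma pm_expand: "(\<Sum>m\<in>Poly_Mapping.keys p. Poly_Mapping.single m (Poly_Mapping.lookup p m)) = p"
proof (rule poly_mapping_eqI)
  fix k
  show "Poly_Mapping.lookup (\<Sum>m\<in>Poly_Mapping.keys p. Poly_Mapping.single m (Poly_Mapping.lookup p m)) k = Poly_Mapping.lookup p k"
    by (simp add: lookup_sum lookup_single when_def in_keys_iff)
qed

lemma Psi_expand: "Psi c p = (\<Sum>m\<in>Poly_Mapping.keys p. Poly_Mapping.single m (emb (Poly_Mapping.lookup p m) * wt c m))"
proof -
  have "Psi c p = Psi c (\<Sum>m\<in>Poly_Mapping.keys p. Poly_Mapping.single m (Poly_Mapping.lookup p m))"
    by (simp only: pm_expand)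
  also have "\<dots> = (\<Sum>m\<in>Poly_Mapping.keys p. Poly_Mapping.single m (emb (Poly_Mapping.lookup p m) * wt c m))"
    by (simp add: Psi_sum Psi_single)
  finally show ?thesis .
qed

lemma Psi_mult: "Psi c (p * q) = Psi c p * Psi c q"
proof -
  have "p * q = (\<Sum>m\<in>Poly_Mapping.keys p. Poly_Mapping.single m (Poly_Mapping.lookup p m)) *
       (\<Sum>m\<in>Poly_Mapping.keys q. Poly_Mapping.single m (Poly_Mapping.lookup q m))"
    by (simp only: pm_expand)
  also have "\<dots> = (\<Sum>m\<in>Poly_Mapping.keys p. \<Sum>m'\<in>Poly_Mapping.keys q.
       Poly_Mapping.single (m + m') (Poly_Mapping.lookup p m * Poly_Mapping.lookup q m'))"
    by (simp only: sum_product mult_single)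
  finally have pq: "p * q = \<dots>" .
  have L: "Psi c (p * q) = (\<Sum>m\<in>Poly_Mapping.keys p. \<Sum>m'\<in>Poly_Mapping.keys q.
       Poly_Mapping.single (m + m') (emb (Poly_Mapping.lookup p m * Poly_Mapping.lookup q m') * wt c (m + m')))"
    by (simp only: pq Psi_sum Psi_single)
  have R: "Psi c p * Psi c q = (\<Sum>m\<in>Poly_Mapping.keys p. \<Sum>m'\<in>Poly_Mapping.keys q.
       Poly_Mapping.single (m + m') ((emb (Poly_Mapping.lookup p m) * wt c m) * (emb (Poly_Mapping.lookup q m') * wt c m')))"
    by (simp only: Psi_expand[of c p] Psi_expand[of c q] sum_product mult_single)
  show ?thesis unfolding L R by (simp add: wt_add emb_mult mult_ac)
qed

lemma Psi_1[simp]: "Psi c 1 = 1"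
proof -
  have "Psi c (Poly_Mapping.single 0 1) = Poly_Mapping.single 0 1" by (simp only: Psi_single) simp
  then show ?thesis by (simp only: single_one)
qed

lemma Psi_prod: "Psi c (prod f A) = (\<Prod>x\<in>A. Psi c (f x))"
  by (induction A rule: infinite_finite_induct) (auto simp: Psi_mult)

lemma Psi_power: "Psi c (p ^ n) = Psi c p ^ n"
  by (induction n) (auto simp: Psi_mult)

lemma Psi_mconst: "Psi c (mconst a) = mconst (emb a)"
  by (simp add: mconst_def Psi_single)

lemma mconst_mult: "mconst a * mconst b = mconst (a * b)"
  by (simp add: mconst_def mult_single)

lemma Psi_mvar: "Psi c (mvar j) = mconst (c j) * mvar j"
  unfolding mvar_def mconst_def Psi_single wt_single by (simp add: mult_single)

lemma lookup_map_emb: "Poly_Mapping.lookup (Poly_Mapping.map emb p) m = emb (Poly_Mapping.lookup p m)"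
  by (simp add: map.rep_eq when_def)

lemma keys_map_emb: "Poly_Mapping.keys (Poly_Mapping.map emb p) = Poly_Mapping.keys p"
  by (auto simp: in_keys_iff lookup_map_emb)

lemma Psi_msubst: "Psi c (msubst s p) = msubst (\<lambda>i. Psi c (s i)) (Poly_Mapping.map emb p)"
  by (simp add: msubst_def keys_map_emb lookup_map_emb Psi_sum Psi_mult Psi_mconst Psi_prod Psi_power)

lemma Psi_lin_change:
  "Psi c (lin_change h p) = lin_change (\<chi> i j. emb (h $ i $ j) * c j) (Poly_Mapping.map emb p)"
  unfolding lin_change_def Psi_msubst
  by (simp only: Psi_sum Psi_mult Psi_mconst Psi_mvar mult.assoc[symmetric] mconst_mult vec_lambda_beta)

lemma det_emb: "det (\<chi> i j. emb (h $ i $ j)) = emb (det h)"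
  unfolding det_def by (simp add: emb_sum emb_mult emb_prod emb_of_int)

lemma det_scaled: "det (\<chi> i j. emb (h $ i $ j) * c j) = emb (det h) * (\<Prod>j\<in>UNIV. c j)"
proof -
  have "det (\<chi> i j. emb (h $ i $ j) * c j) = det (transpose (\<chi> i j. emb (h $ i $ j) * c j))"
    by (simp add: det_transpose)
  also have "transpose (\<chi> i j. emb (h $ i $ j) * c j) = (\<chi> i. c i *s (\<chi> j. emb (h $ j $ i)))"
    by (simp add: transpose_def vec_eq_iff mult.commute)
  also have "det \<dots> = (\<Prod>j\<in>UNIV. c j) * det (\<chi> i. (\<chi> j. emb (h $ j $ i)))"
    by (rule det_rows_mul)
  also have "(\<chi> i. (\<chi> j. emb (h $ j $ i))) = transpose (\<chi> i j. emb (h $ i $ j))"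
    by (simp add: transpose_def)
  finally show ?thesis by (simp add: det_transpose det_emb mult.commute)
qed

lemma tf_sum: "tf (sum f A) = (\<Sum>x\<in>A. tf (f x))"
  by (induction A rule: infinite_finite_induct) auto
lemma tf_prod: "tf (prod f A) = (\<Prod>x\<in>A. tf (f x))"
  by (induction A rule: infinite_finite_induct) auto
lemma tf_power: "tf (a ^ n) = tf a ^ n"
  by (induction n) auto

lemma eval_tf:
  assumes "\<And>m. c m = tf (P m)"
  shows "eval_coeff F c = tf (\<Sum>\<mu>\<in>Poly_Mapping.keys F. [:Poly_Mapping.lookup F \<mu>:] *
     (\<Prod>m\<in>Poly_Mapping.keys \<mu>. P m ^ Poly_Mapping.lookup \<mu> m))"
  by (simp only: eval_coeff_def assms tf_sum tf_mult tf_prod tf_power emb_tf)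

lemma eval_emb:
  "eval_coeff F (\<lambda>m. emb (v m)) = emb (\<Sum>\<mu>\<in>Poly_Mapping.keys F. Poly_Mapping.lookup F \<mu> *
     (\<Prod>m\<in>Poly_Mapping.keys \<mu>. v m ^ Poly_Mapping.lookup \<mu> m))"
  by (simp add: eval_coeff_def emb_sum emb_prod emb_power emb_mult)

lemma poly0_R:
  assumes "\<And>m. poly (P m) 0 = 0" and "0 < e" and "homogeneous e F"
  shows "poly (\<Sum>\<mu>\<in>Poly_Mapping.keys F. [:Poly_Mapping.lookup F \<mu>:] *
     (\<Prod>m\<in>Poly_Mapping.keys \<mu>. P m ^ Poly_Mapping.lookup \<mu> m)) 0 = 0"
proof -
  have "(\<Prod>m\<in>Poly_Mapping.keys \<mu>. poly (P m) 0 ^ Poly_Mapping.lookup \<mu> m) = 0"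
    if "\<mu> \<in> Poly_Mapping.keys F" for \<mu>
  proof -
    have "mdeg \<mu> = e" using assms(3) that by (simp add: homogeneous_def)
    then have "Poly_Mapping.keys \<mu> \<noteq> {}" using assms(2) by (auto simp: mdeg_def)
    then obtain m where m: "m \<in> Poly_Mapping.keys \<mu>" by blast
    have "poly (P m) 0 ^ Poly_Mapping.lookup \<mu> m = 0" using m assms(1) by (simp add: in_keys_iff zero_power)
    then show ?thesis using m by (intro prod_zero) auto
  qed
  then show ?thesis by (simp add: poly_sum poly_prod)
qed

subsection \<open>Weights\<close>

definition Wt :: "('n::finite \<Rightarrow> int) \<Rightarrow> ('n \<Rightarrow>\<^sub>0 nat) \<Rightarrow> int" where
  "Wt w m = (\<Sum>j\<in>UNIV. w j * int (Poly_Mapping.lookup m j))"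

lemma Wt_add: "Wt w (a + b) = Wt w a + Wt w b"
  by (simp add: Wt_def lookup_add sum.distrib distrib_left)

lemma Wt_single: "Wt w (Poly_Mapping.single j 1) = w j"
proof -
  have "(\<Sum>i\<in>UNIV. w i * int (Poly_Mapping.lookup (Poly_Mapping.single j 1) i)) = (\<Sum>i\<in>UNIV. if i = j then w j else 0)"
    by (rule sum.cong) (auto simp: lookup_single when_def)
  then show ?thesis by (simp add: Wt_def)
qed

lemma Wt_keys: "Wt w m = (\<Sum>j\<in>Poly_Mapping.keys m. w j * int (Poly_Mapping.lookup m j))"
  unfolding Wt_def by (rule sum.mono_neutral_right) (auto simp: in_keys_iff)

lemma Wt_const:
  assumes "Poly_Mapping.keys m \<subseteq> S" "\<And>j. j \<in> S \<Longrightarrow> w j = b"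
  shows "Wt w m = b * int (mdeg m)"
proof -
  have "Wt w m = (\<Sum>j\<in>Poly_Mapping.keys m. b * int (Poly_Mapping.lookup m j))"
    unfolding Wt_keys using assms by (intro sum.cong) auto
  then show ?thesis by (simp add: mdeg_def sum_distrib_left)
qed

lemma Wt_ge:
  assumes "Poly_Mapping.keys m \<subseteq> S" "\<And>j. j \<in> S \<Longrightarrow> w j \<ge> 1"
  shows "Wt w m \<ge> int (mdeg m)"
proof -
  have "(\<Sum>j\<in>Poly_Mapping.keys m. int (Poly_Mapping.lookup m j)) \<le> (\<Sum>j\<in>Poly_Mapping.keys m. w j * int (Poly_Mapping.lookup m j))"
  proof (rule sum_mono)
    fix j assume "j \<in> Poly_Mapping.keys m"
    then have "w j \<ge> 1" using assms by auto
    then show "int (Poly_Mapping.lookup m j) \<le> w j * int (Poly_Mapping.lookup m j)"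
      by (simp add: mult_le_cancel_right1)
  qed
  then show ?thesis by (simp add: Wt_keys mdeg_def)
qed

lemma minus_single_add:
  assumes "Poly_Mapping.lookup m j \<noteq> 0"
  shows "(m - Poly_Mapping.single j 1) + Poly_Mapping.single j 1 = (m :: 'n \<Rightarrow>\<^sub>0 nat)"
  using assms by (intro poly_mapping_eqI) (auto simp: lookup_add lookup_minus lookup_single when_def)

lemma Wt_minus:
  assumes "Poly_Mapping.lookup m j \<noteq> 0"
  shows "Wt w (m - Poly_Mapping.single j 1) = Wt w m - w j"
proof -
  have "Wt w m = Wt w (m - Poly_Mapping.single j 1) + Wt w (Poly_Mapping.single j 1)"
    using Wt_add[of w "m - Poly_Mapping.single j 1" "Poly_Mapping.single j 1"] minus_single_add[OF assms]
    by simp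
  then show ?thesis unfolding Wt_single by simp
qed

lemma mdeg_minus:
  assumes "Poly_Mapping.lookup m j \<noteq> 0"
  shows "mdeg (m - Poly_Mapping.single j 1) = mdeg (m :: 'n::finite \<Rightarrow>\<^sub>0 nat) - 1"
proof -
  have "Wt (\<lambda>_. 1) (m - Poly_Mapping.single j 1) = Wt (\<lambda>_. 1) m - 1"
    using Wt_minus[OF assms] by simp
  moreover have "Wt (\<lambda>_. 1) p = int (mdeg p)" for p :: "'n \<Rightarrow>\<^sub>0 nat"
    using Wt_const[of p UNIV "\<lambda>_. 1" 1] by simp
  ultimately have "int (mdeg (m - Poly_Mapping.single j 1)) = int (mdeg m) - 1" by simp
  then show ?thesis by arith
qed

lemma powi_prod:
  assumes "(T :: 'a :: field) \<noteq> 0"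
  shows "(\<Prod>x\<in>A. T powi f x) = T powi (\<Sum>x\<in>A. f x)"
  by (induction A rule: infinite_finite_induct) (auto simp: power_int_add assms)

lemma wt_powi:
  assumes "T \<noteq> 0"
  shows "wt (\<lambda>j. emb (\<kappa> j) * T powi w j) m = emb (\<Prod>j\<in>UNIV. \<kappa> j ^ Poly_Mapping.lookup m j) * T powi Wt w m"
proof -
  have "wt (\<lambda>j. emb (\<kappa> j) * T powi w j) m =
     (\<Prod>j\<in>UNIV. emb (\<kappa> j ^ Poly_Mapping.lookup m j) * T powi (w j * int (Poly_Mapping.lookup m j)))"
    unfolding wt_def by (intro prod.cong) (auto simp: power_mult_distrib emb_power power_int_power')
  also have "\<dots> = emb (\<Prod>j\<in>UNIV. \<kappa> j ^ Poly_Mapping.lookup m j) * T powi Wt w m"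
    by (simp add: prod.distrib emb_prod powi_prod[OF assms] Wt_def)
  finally show ?thesis .
qed

lemma keys_mvar: "Poly_Mapping.keys (mvar x :: ('n, 'a::field) mpoly) = {Poly_Mapping.single x 1}"
  by (simp add: mvar_def)

lemma keys_pderiv:
  "Poly_Mapping.keys (pderiv_var j H) \<subseteq> {m - Poly_Mapping.single j 1 | m. m \<in> Poly_Mapping.keys H \<and> Poly_Mapping.lookup m j \<noteq> 0}"
proof -
  have "Poly_Mapping.keys (pderiv_var j H) \<subseteq> (\<Union>m\<in>Poly_Mapping.keys H. Poly_Mapping.keys (Poly_Mapping.single (m - Poly_Mapping.single j 1)
     (of_nat (Poly_Mapping.lookup m j) * Poly_Mapping.lookup H m)))"
    unfolding pderiv_var_def by (rule keys_sum)
  also have "\<dots> \<subseteq> {m - Poly_Mapping.single j 1 | m. m \<in> Poly_Mapping.keys H \<and> Poly_Mapping.lookup m j \<noteq> 0}"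
    apply (auto split: if_splits)
    subgoal for x by (rule exI[of _ x]) (auto intro!: gr0I)
    done
  finally show ?thesis .
qed

lemma keys_mvar_mult:
  "Poly_Mapping.keys (mvar x * q :: ('n, 'a::field) mpoly) \<subseteq> {Poly_Mapping.single x 1 + b | b. b \<in> Poly_Mapping.keys q}"
  using keys_mult[of "mvar x" q] by (auto simp: keys_mvar)

theorem lemma1p4:
  fixes f :: "('n::finite, 'k::field) mpoly" and d :: nat
  assumes "d + 1 \<ge> 3"
    and "homogeneous (d + 1) f"
    and "LDS (d + 1) f"
  shows "\<not> GIT_semistable (d + 1) f"
proof
  assume "GIT_semistable (d + 1) f"
  then obtain F e where e: "0 < e" "homogeneous e F" and inv: "SL_invariant (d + 1) F"
    and nz: "eval_coeff F (Poly_Mapping.lookup (Poly_Mapping.map emb f)) \<noteq> 0"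
    unfolding GIT_semistable_def by blast
  from assms(3) obtain h :: "'k ^ 'n ^ 'n" and ee :: "nat \<Rightarrow> 'n" and l H G where
    dh: "det h \<noteq> 0" and bij: "bij_betw ee {..<CARD('n)} UNIV" and l1: "1 \<le> l"
    and l2: "2 * l \<le> CARD('n)"
    and hH: "homogeneous (d + 1) H" and vH: "vars_in (ee ` {l..<2*l}) H"
    and hG: "homogeneous (d + 1) G" and vG: "vars_in (ee ` {l..<CARD('n)}) G"
    and P: "lin_change h f = (\<Sum>i<l. mvar (ee i) * pderiv_var (ee (l + i)) H) + G"
    unfolding LDS_def by blast
  define n where "n = CARD('n)"
  have injee: "inj_on ee {..<n}" and imee: "ee ` {..<n} = UNIV"
    using bij by (auto simp: n_def bij_betw_def)
  define idx where "idx = the_inv_into {..<n} ee"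
  have idx1: "idx j < n" for j
    using the_inv_into_into[OF injee, of j "{..<n}"] imee by (auto simp: idx_def)
  have idx2: "ee (idx j) = j" for j
    using f_the_inv_into_f[OF injee, of j] imee by (auto simp: idx_def)
  have idx3: "idx (ee i) = i" if "i < n" for i
    using the_inv_into_f_f[OF injee, of i] that by (auto simp: idx_def)
  define wi :: "nat \<Rightarrow> int" where
    "wi i = (if i < l then - (2 * int n - 2 * int l) else if i < 2 * l then int n else int l)" for i
  define w :: "'n \<Rightarrow> int" where "w j = wi (idx j)" for j
  have wee: "w (ee i) = wi i" if "i < n" for i
    using idx3[OF that] by (simp add: w_def)

  define Pf where "Pf = lin_change h f"
  have Kpos: "Wt w m > 0" if m: "m \<in> Poly_Mapping.keys Pf" for m
  proof -
    have "m \<in> Poly_Mapping.keys (\<Sum>i<l. mvar (ee i) * pderiv_var (ee (l + i)) H) \<or> m \<in> Poly_Mapping.keys G"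
      using m keys_add[of "\<Sum>i<l. mvar (ee i) * pderiv_var (ee (l + i)) H" G] unfolding Pf_def P by blast
    then show ?thesis
    proof
      assume "m \<in> Poly_Mapping.keys (\<Sum>i<l. mvar (ee i) * pderiv_var (ee (l + i)) H)"
      then obtain i where i: "i < l" and mi: "m \<in> Poly_Mapping.keys (mvar (ee i) * pderiv_var (ee (l + i)) H)"
        using keys_sum[of "\<lambda>i. mvar (ee i) * pderiv_var (ee (l + i)) H" "{..<l}"] by blast
      then obtain b where b: "m = Poly_Mapping.single (ee i) 1 + b" and bk: "b \<in> Poly_Mapping.keys (pderiv_var (ee (l + i)) H)"
        using keys_mvar_mult[of "ee i" "pderiv_var (ee (l + i)) H"] by blast
      then obtain m0 where b0: "b = m0 - Poly_Mapping.single (ee (l + i)) 1" and m0: "m0 \<in> Poly_Mapping.keys H"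
        and m0j: "Poly_Mapping.lookup m0 (ee (l + i)) \<noteq> 0"
        using keys_pderiv[of "ee (l + i)" H] by blast
      have "Wt w m0 = int n * int (mdeg m0)"
      proof (rule Wt_const)
        show "Poly_Mapping.keys m0 \<subseteq> ee ` {l..<2*l}" using vH m0 by (simp add: vars_in_def)
        fix j assume "j \<in> ee ` {l..<2*l}"
        then obtain k where "l \<le> k" "k < 2 * l" "j = ee k" by auto
        then show "w j = int n" using l2 wee[of k] by (simp add: wi_def n_def)
      qed
      also have "mdeg m0 = d + 1" using hH m0 by (simp add: homogeneous_def)
      finally have W0: "Wt w m0 = int n * (int d + 1)" by simp
      have "Wt w m = w (ee i) + (Wt w m0 - w (ee (l + i)))"
        by (simp only: b b0 Wt_add Wt_single Wt_minus[OF m0j])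
      also have "w (ee i) = - (2 * int n - 2 * int l)" using i l2 wee[of i] by (simp add: wi_def n_def)
      also have "w (ee (l + i)) = int n" using i l2 wee[of "l + i"] by (simp add: wi_def n_def)
      finally have "Wt w m = int n * int d - 2 * int n + 2 * int l" using W0 by (simp add: algebra_simps)
      moreover have "int n * int d \<ge> int n * 2" using assms(1) by (intro mult_left_mono) auto
      ultimately show ?thesis using l1 by linarith
    next
      assume mG: "m \<in> Poly_Mapping.keys G"
      have "Wt w m \<ge> int (mdeg m)"
      proof (rule Wt_ge)
        show "Poly_Mapping.keys m \<subseteq> ee ` {l..<n}" using vG mG by (simp add: vars_in_def n_def)
        fix j assume "j \<in> ee ` {l..<n}"
        then obtain k where "l \<le> k" "k < n" "j = ee k" by auto
        then show "w j \<ge> 1" using l1 l2 wee[of k] by (simp add: wi_def n_def)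
      qed
      moreover have "mdeg m = d + 1" using hG mG by (simp add: homogeneous_def)
      ultimately show ?thesis by simp
    qed
  qed

  have sumw: "(\<Sum>j\<in>UNIV. w j) = 0"
  proof -
    have "(\<Sum>j\<in>UNIV. w j) = (\<Sum>i\<in>{..<n}. w (ee i))"
      using sum.reindex_bij_betw[OF bij, of w] by (simp add: n_def)
    also have "\<dots> = (\<Sum>i\<in>{0..<n}. wi i)"
      by (simp add: wee atLeast0LessThan)
    also have "\<dots> = (\<Sum>i\<in>{0..<l}. wi i) + (\<Sum>i\<in>{l..<2*l}. wi i) + (\<Sum>i\<in>{2*l..<n}. wi i)"
      using l2 sum.atLeastLessThan_concat[of 0 l "2*l" wi] sum.atLeastLessThan_concat[of 0 "2*l" n wi]
      by (simp add: n_def)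
    also have "(\<Sum>i\<in>{0..<l}. wi i) = (\<Sum>i\<in>{0..<l}. - (2 * int n - 2 * int l))"
      by (rule sum.cong) (auto simp: wi_def)
    also have "(\<Sum>i\<in>{l..<2*l}. wi i) = (\<Sum>i\<in>{l..<2*l}. int n)"
      by (rule sum.cong) (auto simp: wi_def)
    also have "(\<Sum>i\<in>{2*l..<n}. wi i) = (\<Sum>i\<in>{2*l..<n}. int l)"
      by (rule sum.cong) (auto simp: wi_def)
    finally have "(\<Sum>j\<in>UNIV. w j) = int l * (- (2 * int n - 2 * int l)) + int l * int n + int (n - 2 * l) * int l"
      by simp
    also have "int (n - 2 * l) = int n - 2 * int l" using l2 by (simp add: n_def)
    finally show ?thesis by (simp add: algebra_simps)
  qed

  txt \<open>The one-parameter subgroup combined with the change of variables\<close>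
  define T :: "'k ratfun" where "T = tf [:0, 1:]"
  have T0: "T \<noteq> 0" by (simp add: T_def)
  define \<kappa> :: "'n \<Rightarrow> 'k" where "\<kappa> j = (if j = ee 0 then inverse (det h) else 1)" for j
  define c :: "'n \<Rightarrow> 'k ratfun" where "c j = emb (\<kappa> j) * T powi w j" for j
  define g where "g = (\<chi> i j. emb (h $ i $ j) * c j)"
  have prodk: "(\<Prod>j\<in>UNIV. \<kappa> j) = inverse (det h)"
    by (simp add: \<kappa>_def prod.delta)
  have "(\<Prod>j\<in>UNIV. c j) = emb (\<Prod>j\<in>UNIV. \<kappa> j) * T powi (\<Sum>j\<in>UNIV. w j)"
    by (simp add: c_def prod.distrib emb_prod powi_prod[OF T0])
  then have "(\<Prod>j\<in>UNIV. c j) = emb (inverse (det h))" by (simp add: prodk sumw)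
  then have detg: "det g = 1"
    using dh by (simp add: g_def det_scaled emb_mult[symmetric])
  define \<phi> where "\<phi> = Poly_Mapping.map emb f"
  have hphi: "homogeneous (d + 1) \<phi>"
    using assms(2) by (simp add: \<phi>_def homogeneous_def keys_map_emb)
  have eq1: "eval_coeff F (Poly_Mapping.lookup (lin_change g \<phi>)) = eval_coeff F (Poly_Mapping.lookup \<phi>)"
    using inv detg hphi unfolding SL_invariant_def by blast
  have lg: "lin_change g \<phi> = Psi c Pf"
    by (simp add: Pf_def g_def \<phi>_def c_def Psi_lin_change)
  define Q where "Q m = (if Poly_Mapping.lookup Pf m = 0 then 0 else
     [:Poly_Mapping.lookup Pf m:] * [:\<Prod>j\<in>UNIV. \<kappa> j ^ Poly_Mapping.lookup m j:] * [:0, 1:] ^ nat (Wt w m))" for m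
  have lookQ: "Poly_Mapping.lookup (Psi c Pf) m = tf (Q m)" for m
  proof (cases "Poly_Mapping.lookup Pf m = 0")
    case True then show ?thesis by (simp add: lookup_Psi Q_def)
  next
    case False
    then have "Wt w m > 0" using Kpos by (simp add: in_keys_iff)
    then have "T powi Wt w m = T ^ nat (Wt w m)"
      by (metis int_nat_eq less_le power_int_of_nat)
    moreover have cc: "c = (\<lambda>j. emb (\<kappa> j) * T powi w j)" by (simp add: c_def fun_eq_iff)
    ultimately have "Poly_Mapping.lookup (Psi c Pf) m = emb (Poly_Mapping.lookup Pf m) *
        (emb (\<Prod>j\<in>UNIV. \<kappa> j ^ Poly_Mapping.lookup m j) * T ^ nat (Wt w m))"
      by (simp only: lookup_Psi cc wt_powi[OF T0])
    then show ?thesis using False unfolding Q_def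
      by (simp add: emb_tf T_def tf_power[symmetric] tf_mult[symmetric] del: tf_mult tf_power)
  qed
  have pQ: "poly (Q m) 0 = 0" for m
  proof (cases "Poly_Mapping.lookup Pf m = 0")
    case False
    then have "Wt w m > 0" using Kpos by (simp add: in_keys_iff)
    then show ?thesis using False by (simp add: Q_def zero_power)
  qed (simp add: Q_def)
  define R where "R = (\<Sum>\<mu>\<in>Poly_Mapping.keys F. [:Poly_Mapping.lookup F \<mu>:] *
     (\<Prod>m\<in>Poly_Mapping.keys \<mu>. Q m ^ Poly_Mapping.lookup \<mu> m))"
  have L: "eval_coeff F (Poly_Mapping.lookup (lin_change g \<phi>)) = tf R"
    unfolding lg R_def by (rule eval_tf) (rule lookQ)
  have pR: "poly R 0 = 0" unfolding R_def by (rule poly0_R[OF pQ e])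
  define v where "v = (\<Sum>\<mu>\<in>Poly_Mapping.keys F. Poly_Mapping.lookup F \<mu> *
     (\<Prod>m\<in>Poly_Mapping.keys \<mu>. Poly_Mapping.lookup f m ^ Poly_Mapping.lookup \<mu> m))"
  have lphi: "Poly_Mapping.lookup \<phi> = (\<lambda>m. emb (Poly_Mapping.lookup f m))"
    by (simp add: \<phi>_def lookup_map_emb fun_eq_iff)
  have Rr: "eval_coeff F (Poly_Mapping.lookup \<phi>) = tf [:v:]"
    unfolding lphi eval_emb v_def by (simp only: emb_tf)
  have "tf R = tf [:v:]" using eq1 L Rr by simp
  then have "R = [:v:]" by simp
  then have "v = 0" using pR by simp
  then show False using nz Rr by (simp add: \<phi>_def)
qed

end
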